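(* Let $M\ge1$ and let $\tau\in\mathbb{R}^{M+2}_{>0}$ be an $(M+1)$-layer travel time vector such that the set $$S=\{k\in\mathfrak{L}^\tau_{M+1}: k\neq k^{M+1},\ \langle k,\tau\rangle=\langle k^{M+1},\tau\rangle\}$$ is nonempty, where $k^{M+1}=(1,\ldots,1)\in\mathbb{Z}^{M+2}$. Let $\mathcal{R}$ be the set of all $(R_0,\ldots,R_M)\in(-1,1)^{M+1}$ for which there exists a nonzero $R_{M+1}\in(-1,1)$ such that, with $R'=(R_0,\ldots,R_{M+1})$, $$a(R',k^{M+1})+\sum_{k\in S}a(R',k)=0.$$ Then $\mathcal{R}$ has strictly positive Lebesgue measure in $\mathbb{R}^{M+1}$.
   Context: For $N\ge1$, $\mathfrak{L}_N\subset\mathbb{Z}^{N+1}_{\geq0}$ is the set of $k=(k_0,\ldots,k_N)$ with $k_0=1$ such that $k_n>0\Rightarrow k_{n-1}>0$ for $1\le n\le N$; for $\tau\in\mathbb{R}^{N+1}_{>0}$, $\mathfrak{L}^\tau_N=\{k\in\mathfrak{L}_N:\langle k,\tau\rangle\le\langle\mathbb{1},\tau\rangle\}$. Amplitude polynomial (for $k\in\mathfrak{L}_N$, $x=(x_0,\ldots,x_N)$): $\mathbb{1}=(1,\ldots,1)$; inequalities and $\min$ entrywise; $x^k=\prod_n x_n^{k_n}$, $\binom{k}{b}=\prod_n\binom{k_n}{b_n}$; $\tilde k=(k_1,\ldots,k_N,0)$, $u=\min\{\mathbb{1},\tilde k\}$, $V(k)=\{b:u\le b\le\min\{k,\tilde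 k\}\}$, $a(x,k)=\sum_{b\in V(k)}\binom{k}{b}\binom{\tilde k-u}{b-u}(-x)^{\tilde k-b}x^{k-b}\prod_n(1-x_n^2)^{b_n}$. *)

theory Defs
  imports "HOL-Analysis.Analysis"
begin

text \<open>Integer vectors k = (k_0,...,k_N) are represented as functions nat => nat
  that vanish beyond index N; real vectors x = (x_0,...,x_N) as functions nat => real
  of which only the entries 0..N are used.\<close>

definition Lset :: "nat \<Rightarrow> (nat \<Rightarrow> nat) set" where
  "Lset N = {k. k 0 = 1 \<and> (\<forall>n. 1 \<le> n \<and> n \<le> N \<and> k n > 0 \<longrightarrow> k (n - 1) > 0)
               \<and> (\<forall>n>N. k n = 0)}"

definition ip :: "nat \<Rightarrow> (nat \<Rightarrow> nat) \<Rightarrow> (nat \<Rightarrow> real) \<Rightarrow> real" where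
  "ip N k \<tau> = (\<Sum>n\<le>N. real (k n) * \<tau> n)"

definition onevec :: "nat \<Rightarrow> nat \<Rightarrow> nat" where
  "onevec N = (\<lambda>n. if n \<le> N then 1 else 0)"

definition Ltau :: "nat \<Rightarrow> (nat \<Rightarrow> real) \<Rightarrow> (nat \<Rightarrow> nat) set" where
  "Ltau N \<tau> = {k \<in> Lset N. ip N k \<tau> \<le> ip N (onevec N) \<tau>}"

definition ktilde :: "nat \<Rightarrow> (nat \<Rightarrow> nat) \<Rightarrow> nat \<Rightarrow> nat" where
  "ktilde N k = (\<lambda>n. if n < N then k (n + 1) else 0)"

definition uvec :: "nat \<Rightarrow> (nat \<Rightarrow> nat) \<Rightarrow> nat \<Rightarrow> nat" where
  "uvec N k = (\<lambda>n. min 1 (ktilde N k n))"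

definition Vset :: "nat \<Rightarrow> (nat \<Rightarrow> nat) \<Rightarrow> (nat \<Rightarrow> nat) set" where
  "Vset N k = {b. (\<forall>n\<le>N. uvec N k n \<le> b n \<and> b n \<le> min (k n) (ktilde N k n))
                 \<and> (\<forall>n>N. b n = 0)}"

definition amp :: "nat \<Rightarrow> (nat \<Rightarrow> real) \<Rightarrow> (nat \<Rightarrow> nat) \<Rightarrow> real" where
  "amp N x k = (\<Sum>b\<in>Vset N k. \<Prod>n\<le>N.
      real (k n choose b n) * real ((ktilde N k n - uvec N k n) choose (b n - uvec N k n))
      * (- x n) ^ (ktilde N k n - b n) * x n ^ (k n - b n) * (1 - (x n)\<^sup>2) ^ (b n))"

definition Sset :: "nat \<Rightarrow> (nat \<Rightarrow> real) \<Rightarrow> (nat \<Rightarrow> nat) set" where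
  "Sset M \<tau> = {k \<in> Ltau (M + 1) \<tau>. k \<noteq> onevec (M + 1)
                 \<and> ip (M + 1) k \<tau> = ip (M + 1) (onevec (M + 1)) \<tau>}"

definition Rset :: "nat \<Rightarrow> (nat \<Rightarrow> real) \<Rightarrow> (nat \<Rightarrow> real) set" where
  "Rset M \<tau> = {R \<in> PiE {..M} (\<lambda>_. UNIV). (\<forall>i\<le>M. \<bar>R i\<bar> < 1) \<and>
     (\<exists>r. r \<noteq> 0 \<and> \<bar>r\<bar> < 1 \<and>
        amp (M + 1) (R(M + 1 := r)) (onevec (M + 1))
        + (\<Sum>k\<in>Sset M \<tau>. amp (M + 1) (R(M + 1 := r)) k) = 0)}"

definition lebM :: "nat \<Rightarrow> (nat \<Rightarrow> real) measure" where
  "lebM M = completion (Pi\<^sub>M {..M} (\<lambda>_. lborel))"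

end

theory Submission
  imports Defs
begin

lemma Lset_pos:
  assumes k: "k \<in> Lset N" and kN: "k N > 0"
  shows "\<forall>n\<le>N. k n > 0"
proof -
  have "k (N - j) > 0" for j
  proof (induction j)
    case 0 then show ?case using kN by simp
  next
    case (Suc j)
    show ?case
    proof (cases "N - j \<ge> 1")
      case True
      then have "k (N - j - 1) > 0" using k Suc.IH unfolding Lset_def by auto
      then show ?thesis by (simp add: diff_Suc diff_diff_add)
    next
      case False
      then have "N - Suc j = N - j" by auto
      then show ?thesis using Suc.IH by simp
    qed
  qed
  then show ?thesis by (metis diff_diff_cancel)
qed

lemma Sset_last:
  assumes tau: "\<forall>n\<le>M + 1. \<tau> n > 0" and k: "k \<in> Sset M \<tau>"
  shows "k (M + 1) = 0"
proof (rule ccontr)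
  assume "k (M + 1) \<noteq> 0"
  have kL: "k \<in> Lset (M+1)" using k unfolding Sset_def Ltau_def by auto
  have pos: "\<forall>n\<le>M+1. k n > 0" using Lset_pos[OF kL] \<open>k (M + 1) \<noteq> 0\<close> by auto
  have eq: "ip (M + 1) k \<tau> = ip (M + 1) (onevec (M + 1)) \<tau>" using k unfolding Sset_def by auto
  have "(\<Sum>n\<le>M+1. (real (k n) - 1) * \<tau> n) = 0"
    using eq unfolding ip_def onevec_def by (simp add: sum_subtractf left_diff_distrib)
  moreover have "\<forall>n\<in>{..M+1}. 0 \<le> (real (k n) - 1) * \<tau> n"
    using pos tau by (auto simp: Suc_le_eq)
  ultimately have "\<forall>n\<in>{..M+1}. (real (k n) - 1) * \<tau> n = 0"
    by (subst (asm) sum_nonneg_eq_0_iff) auto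
  then have "\<forall>n\<le>M+1. k n = 1"
  proof (intro allI impI)
    fix n assume n: "n \<le> M+1"
    assume h: "\<forall>n\<in>{..M+1}. (real (k n) - 1) * \<tau> n = 0"
    have "(real (k n) - 1) * \<tau> n = 0" using h n by auto
    moreover have "\<tau> n \<noteq> 0" using tau n by auto
    ultimately show "k n = 1" by simp
  qed
  moreover have "\<forall>n>M+1. k n = 0" using kL unfolding Lset_def by auto
  ultimately have "k = onevec (M+1)" unfolding onevec_def by (auto simp: not_le)
  then show False using k unfolding Sset_def by auto
qed

lemma Sset_finite:
  assumes tau: "\<forall>n\<le>M + 1. \<tau> n > 0"
  shows "finite (Sset M \<tau>)"
proof -
  define T where "T = (\<Sum>n\<le>M+1. \<tau> n)"
  define m where "m = Min (\<tau> ` {..M+1})"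
  have mpos: "m > 0" unfolding m_def using tau by auto
  have mle: "m \<le> \<tau> n" if "n \<le> M+1" for n unfolding m_def using that by auto
  define B where "B = nat \<lfloor>T / m\<rfloor>"
  have sub: "Sset M \<tau> \<subseteq> {f. \<forall>x. (x \<in> {..M+1} \<longrightarrow> f x \<in> {..B}) \<and> (x \<notin> {..M+1} \<longrightarrow> f x = 0)}"
  proof
    fix k assume k: "k \<in> Sset M \<tau>"
    have kL: "k \<in> Lset (M+1)" using k unfolding Sset_def Ltau_def by auto
    have eq: "(\<Sum>n\<le>M+1. real (k n) * \<tau> n) = T"
      using k unfolding Sset_def ip_def onevec_def T_def by auto
    have "k n \<le> B" if n: "n \<le> M+1" for n
    proof -
      have "real (k n) * \<tau> n \<le> (\<Sum>n\<le>M+1. real (k n) * \<tau> n)"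
        by (rule member_le_sum) (use n tau in \<open>auto intro!: mult_nonneg_nonneg simp: less_imp_le\<close>)
      then have "real (k n) * m \<le> T" using eq mle[OF n]
        by (smt (verit) mult_left_mono of_nat_0_le_iff)
      then have "real (k n) \<le> T / m" using mpos by (simp add: field_simps)
      then have "int (k n) \<le> \<lfloor>T / m\<rfloor>" by (simp add: le_floor_iff)
      then show ?thesis unfolding B_def by (metis nat_int nat_mono)
    qed
    then show "k \<in> {f. \<forall>x. (x \<in> {..M+1} \<longrightarrow> f x \<in> {..B}) \<and> (x \<notin> {..M+1} \<longrightarrow> f x = 0)}"
      using kL unfolding Lset_def by auto
  qed
  show ?thesis by (rule finite_subset[OF sub finite_set_of_finite_funs]) auto
qed

lemma Vset_finite: "finite (Vset N k)"
proof -
  define B where "B = Max (k ` {..N})"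
  have "Vset N k \<subseteq> {f. \<forall>x. (x \<in> {..N} \<longrightarrow> f x \<in> {..B}) \<and> (x \<notin> {..N} \<longrightarrow> f x = 0)}"
  proof
    fix b assume b: "b \<in> Vset N k"
    have "b n \<le> B" if "n \<le> N" for n
    proof -
      have "b n \<le> k n" using b that unfolding Vset_def by auto
      also have "k n \<le> B" unfolding B_def using that by auto
      finally show ?thesis .
    qed
    then show "b \<in> {f. \<forall>x. (x \<in> {..N} \<longrightarrow> f x \<in> {..B}) \<and> (x \<notin> {..N} \<longrightarrow> f x = 0)}"
      using b unfolding Vset_def by auto
  qed
  then show ?thesis by (rule finite_subset[OF _ finite_set_of_finite_funs]) auto
qed

lemma amp_onevec: "amp N x (onevec N) = x N * (\<Prod>n<N. 1 - (x n)\<^sup>2)"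
proof -
  define b0 where "b0 = (\<lambda>n. if n < N then 1 else (0::nat))"
  have V: "Vset N (onevec N) = {b0}"
  proof (rule set_eqI, rule iffI)
    fix b assume b: "b \<in> Vset N (onevec N)"
    have "b n = b0 n" for n
    proof (cases "n < N")
      case True
      then show ?thesis using b unfolding Vset_def uvec_def ktilde_def onevec_def b0_def
        by (auto elim!: allE[of _ n])
    next
      case False
      then show ?thesis using b unfolding Vset_def uvec_def ktilde_def onevec_def b0_def
        by (cases "n = N") (auto elim!: allE[of _ n])
    qed
    then show "b \<in> {b0}" by auto
  next
    fix b assume "b \<in> {b0}"
    then show "b \<in> Vset N (onevec N)"
      unfolding Vset_def uvec_def ktilde_def onevec_def b0_def by auto
  qed
  have "amp N x (onevec N) = (\<Prod>n<Suc N.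
      real (onevec N n choose b0 n) * real ((ktilde N (onevec N) n - uvec N (onevec N) n) choose (b0 n - uvec N (onevec N) n))
      * (- x n) ^ (ktilde N (onevec N) n - b0 n) * x n ^ (onevec N n - b0 n) * (1 - (x n)\<^sup>2) ^ (b0 n))"
    unfolding amp_def V by (simp add: lessThan_Suc_atMost)
  also have "\<dots> = (\<Prod>n<N. 1 - (x n)\<^sup>2) * x N"
    unfolding prod.lessThan_Suc
    by (auto intro!: prod.cong simp: b0_def onevec_def ktilde_def uvec_def)
  finally show ?thesis by simp
qed

lemma amp_indep:
  assumes kN: "k N = 0" and xy: "\<forall>n<N. x n = y n"
  shows "amp N x k = amp N y k"
  unfolding amp_def
proof (intro sum.cong refl prod.cong)
  fix b n assume b: "b \<in> Vset N k" and n: "n \<in> {..N}"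
  show "real (k n choose b n) * real ((ktilde N k n - uvec N k n) choose (b n - uvec N k n)) *
       (- x n) ^ (ktilde N k n - b n) * x n ^ (k n - b n) * (1 - (x n)\<^sup>2) ^ b n =
       real (k n choose b n) * real ((ktilde N k n - uvec N k n) choose (b n - uvec N k n)) *
       (- y n) ^ (ktilde N k n - b n) * y n ^ (k n - b n) * (1 - (y n)\<^sup>2) ^ b n"
  proof (cases "n < N")
    case True then show ?thesis using xy by simp
  next
    case False
    then have nN: "n = N" using n by auto
    have "b N = 0" using b kN unfolding Vset_def by (auto elim!: allE[of _ N])
    then show ?thesis using nN kN by (simp add: ktilde_def)
  qed
qed

definition Cf :: "nat \<Rightarrow> (nat \<Rightarrow> real) \<Rightarrow> (nat \<Rightarrow> real) \<Rightarrow> real" where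
  "Cf M \<tau> R = (\<Sum>k\<in>Sset M \<tau>. amp (M+1) (R(M+1:=0)) k)"

definition Pf :: "nat \<Rightarrow> (nat \<Rightarrow> real) \<Rightarrow> real" where
  "Pf M R = (\<Prod>n\<le>M. 1 - (R n)\<^sup>2)"

lemma F_eq:
  assumes tau: "\<forall>n\<le>M + 1. \<tau> n > 0"
  shows "amp (M + 1) (R(M + 1 := r)) (onevec (M + 1))
        + (\<Sum>k\<in>Sset M \<tau>. amp (M + 1) (R(M + 1 := r)) k) = r * Pf M R + Cf M \<tau> R"
proof -
  have 1: "amp (M + 1) (R(M + 1 := r)) (onevec (M + 1)) = r * Pf M R"
    unfolding amp_onevec Pf_def
    by (simp add: lessThan_Suc_atMost[symmetric])
  have 2: "(\<Sum>k\<in>Sset M \<tau>. amp (M + 1) (R(M + 1 := r)) k) = Cf M \<tau> R"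
    unfolding Cf_def
    by (rule sum.cong[OF refl], rule amp_indep) (use Sset_last[OF tau] in auto)
  show ?thesis using 1 2 by simp
qed

lemma Pf_pos: "(\<forall>i\<le>M. \<bar>R i\<bar> < 1) \<Longrightarrow> Pf M R > 0"
  unfolding Pf_def by (rule prod_pos) (auto simp: abs_square_less_1)

lemma Rset_char:
  assumes tau: "\<forall>n\<le>M + 1. \<tau> n > 0"
  shows "Rset M \<tau> = {R \<in> PiE {..M} (\<lambda>_. UNIV). (\<forall>i\<le>M. \<bar>R i\<bar> < 1) \<and> Cf M \<tau> R \<noteq> 0 \<and> \<bar>Cf M \<tau> R\<bar> < Pf M R}"
proof (rule set_eqI, rule iffI)
  fix R assume "R \<in> Rset M \<tau>"
  then obtain r where R: "R \<in> PiE {..M} (\<lambda>_. UNIV)" "\<forall>i\<le>M. \<bar>R i\<bar> < 1" and r: "r \<noteq> 0" "\<bar>r\<bar> < 1"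
    and eq: "r * Pf M R + Cf M \<tau> R = 0"
    unfolding Rset_def F_eq[OF tau] by blast
  have P: "Pf M R > 0" using Pf_pos R(2) by blast
  have "Cf M \<tau> R = - r * Pf M R" using eq by simp
  then have "Cf M \<tau> R \<noteq> 0" "\<bar>Cf M \<tau> R\<bar> < Pf M R" using r P
    by (auto simp: abs_mult)
  then show "R \<in> {R \<in> PiE {..M} (\<lambda>_. UNIV). (\<forall>i\<le>M. \<bar>R i\<bar> < 1) \<and> Cf M \<tau> R \<noteq> 0 \<and> \<bar>Cf M \<tau> R\<bar> < Pf M R}"
    using R by auto
next
  fix R assume "R \<in> {R \<in> PiE {..M} (\<lambda>_. UNIV). (\<forall>i\<le>M. \<bar>R i\<bar> < 1) \<and> Cf M \<tau> R \<noteq> 0 \<and> \<bar>Cf M \<tau> R\<bar> < Pf M R}"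
  then have R: "R \<in> PiE {..M} (\<lambda>_. UNIV)" "\<forall>i\<le>M. \<bar>R i\<bar> < 1" "Cf M \<tau> R \<noteq> 0" "\<bar>Cf M \<tau> R\<bar> < Pf M R"
    by auto
  have P: "Pf M R > 0" using Pf_pos R(2) by blast
  define r where "r = - Cf M \<tau> R / Pf M R"
  have "r \<noteq> 0" unfolding r_def using R(3) P by simp
  have "\<bar>r\<bar> = \<bar>Cf M \<tau> R\<bar> / Pf M R" unfolding r_def using P by simp
  then have "\<bar>r\<bar> < 1" using R(4) P by (simp add: divide_less_eq)
  moreover note \<open>r \<noteq> 0\<close>
  moreover have "r * Pf M R + Cf M \<tau> R = 0" unfolding r_def using P by simp
  ultimately show "R \<in> Rset M \<tau>" unfolding Rset_def F_eq[OF tau] using R by blast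
qed

lemma upd_meas[measurable]:
  "(\<lambda>R::nat\<Rightarrow>real. (R(M+1 := c)) n) \<in> borel_measurable (PiM {..M} (\<lambda>_. lborel))"
proof (cases "n \<le> M")
  case True
  then have eq: "(\<lambda>R::nat\<Rightarrow>real. (R(M+1 := c)) n) = (\<lambda>R. R n)" by auto
  show ?thesis unfolding eq by (measurable, simp add: True)
next
  case False
  show ?thesis
  proof (cases "n = M + 1")
    case True then show ?thesis by simp
  next
    case False2: False
    have "\<And>R. R \<in> space (PiM {..M} (\<lambda>_. lborel)) \<Longrightarrow> (R(M+1 := c)) n = undefined"
      using False False2 by (auto simp: space_PiM PiE_def extensional_def)
    then show ?thesis
      using measurable_cong[where M="PiM {..M} (\<lambda>_. lborel)" and f="\<lambda>R::nat\<Rightarrow>real. (R(M+1 := c)) n"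
          and g="\<lambda>R. undefined" and M'=borel] by simp
  qed
qed

lemma Cf_meas[measurable]: "Cf M \<tau> \<in> borel_measurable (PiM {..M} (\<lambda>_. lborel))"
  unfolding Cf_def amp_def by measurable

lemma Pf_alt: "Pf M R = (\<Prod>n\<le>M. 1 - ((R(M+1:=0)) n)\<^sup>2)"
  unfolding Pf_def by (rule prod.cong) auto

lemma Pf_meas[measurable]: "Pf M \<in> borel_measurable (PiM {..M} (\<lambda>_. lborel))"
  unfolding Pf_alt[abs_def] by measurable

lemma Rset_meas:
  assumes tau: "\<forall>n\<le>M + 1. \<tau> n > 0"
  shows "Rset M \<tau> \<in> sets (PiM {..M} (\<lambda>_. lborel))"
proof -
  have "Rset M \<tau> = {R \<in> space (PiM {..M} (\<lambda>_. lborel)). (\<forall>i\<le>M. \<bar>(R(M+1:=0)) i\<bar> < 1) \<and> Cf M \<tau> R \<noteq> 0 \<and> \<bar>Cf M \<tau> R\<bar> < Pf M R}"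
    unfolding Rset_char[OF tau] by (auto simp: space_PiM)
  also have "\<dots> \<in> sets (PiM {..M} (\<lambda>_. lborel))" by measurable
  finally show ?thesis .
qed

lemma small_root:
  fixes T :: "'a set" and c :: "'a \<Rightarrow> real" and q e :: "'a \<Rightarrow> nat" and L :: nat
  assumes fin: "finite T" and ne: "T \<noteq> {}" and cpos: "\<forall>i\<in>T. c i > 0"
  shows "\<exists>t. 0 < t \<and> t < 1 \<and> (\<Sum>i\<in>T. c i * (-1)^q i * t^(2 * q i+1) * (1-t\<^sup>2)^e i) \<noteq> 0
          \<and> \<bar>\<Sum>i\<in>T. c i * (-1)^q i * t^(2 * q i+1) * (1-t\<^sup>2)^e i\<bar> < (1-t\<^sup>2)^L"
proof -
  define m where "m = Min (q ` T)"
  have mle: "\<forall>i\<in>T. m \<le> q i" using fin unfolding m_def by auto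
  have "m \<in> q ` T" unfolding m_def using fin ne by (intro Min_in) auto
  then obtain i0 where i0: "i0 \<in> T" "q i0 = m" by auto
  define g where "g = (\<lambda>t::real. \<Sum>i\<in>T. c i * (-1)^q i * t^(2*(q i - m)) * (1-t\<^sup>2)^e i)"
  have fg: "(\<Sum>i\<in>T. c i * (-1)^q i * t^(2 * q i+1) * (1-t\<^sup>2)^e i) = t^(2*m+1) * g t" for t
    unfolding g_def sum_distrib_left
  proof (rule sum.cong[OF refl])
    fix i assume "i \<in> T"
    then have "2 * q i + 1 = 2*(q i - m) + (2*m+1)" using mle by auto
    then show "c i * (-1)^q i * t^(2 * q i+1) * (1-t\<^sup>2)^e i = t^(2*m+1) * (c i * (-1)^q i * t^(2*(q i - m)) * (1-t\<^sup>2)^e i)"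
      by (simp add: power_add)
  qed
  have g0: "g 0 = (\<Sum>i\<in>{i\<in>T. q i = m}. (-1)^m * c i)"
    unfolding g_def sum.inter_filter[OF fin]
    by (rule sum.cong[OF refl]) (use mle in auto)
  have "(\<Sum>i\<in>{i\<in>T. q i = m}. c i) > 0"
    by (rule sum_pos) (use fin i0 cpos in auto)
  then have g0ne: "g 0 \<noteq> 0" unfolding g0 sum_distrib_left[symmetric] by simp
  have cont: "isCont g 0" unfolding g_def by (intro continuous_intros)
  define h where "h = (\<lambda>t::real. (1-t\<^sup>2)^L - \<bar>t^(2*m+1) * g t\<bar>)"
  have conth: "isCont h 0" unfolding h_def by (intro continuous_intros cont)
  have h0: "h 0 > 0" unfolding h_def by simp
  have ev1: "eventually (\<lambda>t. g t \<noteq> 0) (at 0)"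
    using tendsto_imp_eventually_ne[OF cont[unfolded isCont_def] g0ne] .
  have ev2: "eventually (\<lambda>t. h t > 0) (at 0)"
    using order_tendstoD(1)[OF conth[unfolded isCont_def] h0] .
  obtain d where d: "d > 0" "\<forall>t. t \<noteq> 0 \<and> dist t 0 < d \<longrightarrow> g t \<noteq> 0 \<and> h t > 0"
    using eventually_conj[OF ev1 ev2] unfolding eventually_at by auto
  define t where "t = min (d/2) (1/2::real)"
  have t: "0 < t" "t < 1" "dist t 0 < d" using d unfolding t_def by auto
  then have gh: "g t \<noteq> 0" "h t > 0" using d by auto
  show ?thesis
    unfolding fg by (rule exI[of _ t]) (use t gh in \<open>auto simp: h_def\<close>)
qed

definition cf :: "nat \<Rightarrow> (nat \<Rightarrow> nat) \<Rightarrow> (nat \<Rightarrow> nat) \<Rightarrow> real" where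
  "cf N k b = (\<Prod>n\<le>N. real (k n choose b n) * real ((ktilde N k n - uvec N k n) choose (b n - uvec N k n)))"
definition sf :: "nat \<Rightarrow> (nat \<Rightarrow> nat) \<Rightarrow> (nat \<Rightarrow> nat) \<Rightarrow> nat" where
  "sf N k b = (\<Sum>n\<le>N. ktilde N k n - b n)"
definition ef :: "nat \<Rightarrow> (nat \<Rightarrow> nat) \<Rightarrow> nat" where
  "ef N b = (\<Sum>n\<le>N. b n)"

lemma cf_pos: "b \<in> Vset N k \<Longrightarrow> cf N k b > 0"
  unfolding cf_def Vset_def
  by (rule prod_pos) (auto simp: zero_less_binomial_iff intro!: diff_le_mono)

lemma exp_eq:
  assumes kL: "k \<in> Lset (Suc M)" and b: "b \<in> Vset (Suc M) k"
  shows "(\<Sum>n\<le>Suc M. ktilde (Suc M) k n - b n + (k n - b n)) = 2 * sf (Suc M) k b + 1"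
proof -
  let ?N = "Suc M"
  have bk: "b n \<le> k n" "b n \<le> ktilde ?N k n" if "n \<le> ?N" for n
    using b that unfolding Vset_def by auto
  have s1: "(\<Sum>n\<le>?N. k n - b n) + ef ?N b = (\<Sum>n\<le>?N. k n)"
    unfolding ef_def sum.distrib[symmetric] by (rule sum.cong) (use bk in auto)
  have s2: "sf ?N k b + ef ?N b = (\<Sum>n\<le>?N. ktilde ?N k n)"
    unfolding ef_def sf_def sum.distrib[symmetric] by (rule sum.cong) (use bk in auto)
  have k0: "k 0 = 1" using kL unfolding Lset_def by auto
  have s3: "(\<Sum>n\<le>?N. k n) = 1 + (\<Sum>n\<le>M. k (Suc n))"
    unfolding sum.atMost_Suc_shift k0 by simp
  have s4: "(\<Sum>n\<le>?N. ktilde ?N k n) = (\<Sum>n\<le>M. k (Suc n))"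
    unfolding sum.atMost_Suc by (simp add: ktilde_def)
  have "(\<Sum>n\<le>?N. ktilde ?N k n - b n + (k n - b n)) = sf ?N k b + (\<Sum>n\<le>?N. k n - b n)"
    unfolding sf_def sum.distrib by simp
  then show ?thesis using s1 s2 s3 s4 by linarith
qed

lemma amp_const_expand:
  assumes kL: "k \<in> Lset (Suc M)"
  shows "amp (Suc M) (\<lambda>_. t) k = (\<Sum>b\<in>Vset (Suc M) k. cf (Suc M) k b * (-1)^(sf (Suc M) k b)
            * t^(2 * sf (Suc M) k b + 1) * (1-t\<^sup>2)^(ef (Suc M) b))"
  unfolding amp_def
proof (rule sum.cong[OF refl])
  fix b assume b: "b \<in> Vset (Suc M) k"
  let ?N = "Suc M"
  have "(\<Prod>n\<le>?N. real (k n choose b n) * real ((ktilde ?N k n - uvec ?N k n) choose (b n - uvec ?N k n))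
      * (- t) ^ (ktilde ?N k n - b n) * t ^ (k n - b n) * (1 - t\<^sup>2) ^ (b n))
    = (\<Prod>n\<le>?N. (real (k n choose b n) * real ((ktilde ?N k n - uvec ?N k n) choose (b n - uvec ?N k n)))
      * (-1) ^ (ktilde ?N k n - b n) * t ^ (ktilde ?N k n - b n + (k n - b n)) * (1 - t\<^sup>2) ^ (b n))"
    by (rule prod.cong[OF refl]) (simp add: power_minus[of t] power_add)
  also have "\<dots> = cf ?N k b * (-1)^(sf ?N k b) * t^(\<Sum>n\<le>?N. ktilde ?N k n - b n + (k n - b n)) * (1-t\<^sup>2)^(ef ?N b)"
    unfolding cf_def sf_def ef_def prod.distrib power_sum by simp
  also have "\<dots> = cf ?N k b * (-1)^(sf ?N k b) * t^(2 * sf ?N k b + 1) * (1-t\<^sup>2)^(ef ?N b)"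
    by (simp only: exp_eq[OF kL b])
  finally show "(\<Prod>n\<le>?N. real (k n choose b n) * real ((ktilde ?N k n - uvec ?N k n) choose (b n - uvec ?N k n))
      * (- t) ^ (ktilde ?N k n - b n) * t ^ (k n - b n) * (1 - t\<^sup>2) ^ (b n))
     = cf ?N k b * (-1)^(sf ?N k b) * t^(2 * sf ?N k b + 1) * (1-t\<^sup>2)^(ef ?N b)" .
qed

lemma uvec_in_Vset: "k \<in> Lset N \<Longrightarrow> uvec N k \<in> Vset N k"
  unfolding Vset_def
proof (intro CollectI conjI allI impI)
  fix n assume k: "k \<in> Lset N" and n: "n \<le> N"
  show "uvec N k n \<le> uvec N k n" by simp
  show "uvec N k n \<le> min (k n) (ktilde N k n)"
  proof (cases "n < N \<and> k (n+1) > 0")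
    case True
    then have "k n > 0" using k unfolding Lset_def by (auto elim!: allE[of _ "n+1"])
    then show ?thesis unfolding uvec_def ktilde_def by auto
  next
    case False
    then show ?thesis unfolding uvec_def ktilde_def by auto
  qed
next
  fix n assume "N < n" then show "uvec N k n = 0" unfolding uvec_def ktilde_def by auto
qed

lemma cont_upd[continuous_intros]: "continuous_on UNIV (\<lambda>R::nat\<Rightarrow>real. (R(j := c)) n)"
proof (cases "n = j")
  case True then show ?thesis by simp
next
  case False
  then show ?thesis by simp
qed

lemma Cf_cont: "continuous_on UNIV (Cf M \<tau>)"
  unfolding Cf_def[abs_def] amp_def by (intro continuous_intros)

lemma Pf_cont: "continuous_on UNIV (Pf M)"
  unfolding Pf_alt[abs_def] by (intro continuous_intros)

lemma exists_good_point:
  assumes tau: "\<forall>n\<le>M + 1. \<tau> n > 0" and ne: "Sset M \<tau> \<noteq> {}"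
  shows "\<exists>t0. 0 < t0 \<and> t0 < 1 \<and> (\<Sum>k\<in>Sset M \<tau>. amp (Suc M) (\<lambda>_. t0) k) \<noteq> 0
     \<and> \<bar>\<Sum>k\<in>Sset M \<tau>. amp (Suc M) (\<lambda>_. t0) k\<bar> < (1 - t0\<^sup>2) ^ Suc M"
proof -
  define S where "S = Sset M \<tau>"
  have finS: "finite S" unfolding S_def using Sset_finite[OF tau] .
  have SL: "k \<in> Lset (Suc M)" if "k \<in> S" for k using that unfolding S_def Sset_def Ltau_def by auto
  define T where "T = Sigma S (\<lambda>k. Vset (Suc M) k)"
  have finT: "finite T" unfolding T_def using finS Vset_finite by auto
  obtain k0 where "k0 \<in> S" using ne unfolding S_def by auto
  then have "(k0, uvec (Suc M) k0) \<in> T" unfolding T_def using uvec_in_Vset SL by auto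
  then have neT: "T \<noteq> {}" by auto
  have cpos: "\<forall>i\<in>T. (\<lambda>(k,b). cf (Suc M) k b) i > 0" unfolding T_def using cf_pos by auto
  obtain t where t: "0 < t" "t < 1"
    "(\<Sum>i\<in>T. (\<lambda>(k,b). cf (Suc M) k b) i * (-1)^((\<lambda>(k,b). sf (Suc M) k b) i)
        * t^(2 * (\<lambda>(k,b). sf (Suc M) k b) i+1) * (1-t\<^sup>2)^((\<lambda>(k,b). ef (Suc M) b) i)) \<noteq> 0"
    "\<bar>\<Sum>i\<in>T. (\<lambda>(k,b). cf (Suc M) k b) i * (-1)^((\<lambda>(k,b). sf (Suc M) k b) i)
        * t^(2 * (\<lambda>(k,b). sf (Suc M) k b) i+1) * (1-t\<^sup>2)^((\<lambda>(k,b). ef (Suc M) b) i)\<bar> < (1-t\<^sup>2)^Suc M"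
    using small_root[OF finT neT cpos, of "\<lambda>(k,b). sf (Suc M) k b" "\<lambda>(k,b). ef (Suc M) b" "Suc M"]
    by blast
  have eq: "(\<Sum>k\<in>S. amp (Suc M) (\<lambda>_. t) k) =
    (\<Sum>i\<in>T. (\<lambda>(k,b). cf (Suc M) k b) i * (-1)^((\<lambda>(k,b). sf (Suc M) k b) i)
        * t^(2 * (\<lambda>(k,b). sf (Suc M) k b) i+1) * (1-t\<^sup>2)^((\<lambda>(k,b). ef (Suc M) b) i))"
  proof -
    have "(\<Sum>k\<in>S. amp (Suc M) (\<lambda>_. t) k) = (\<Sum>k\<in>S. \<Sum>b\<in>Vset (Suc M) k. cf (Suc M) k b * (-1)^(sf (Suc M) k b)
            * t^(2 * sf (Suc M) k b + 1) * (1-t\<^sup>2)^(ef (Suc M) b))"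
      by (rule sum.cong[OF refl]) (simp add: amp_const_expand SL)
    also have "\<dots> = (\<Sum>(k,b)\<in>T. cf (Suc M) k b * (-1)^(sf (Suc M) k b)
            * t^(2 * sf (Suc M) k b + 1) * (1-t\<^sup>2)^(ef (Suc M) b))"
      unfolding T_def by (rule sum.Sigma) (use finS Vset_finite in auto)
    also have "\<dots> = (\<Sum>i\<in>T. (\<lambda>(k,b). cf (Suc M) k b) i * (-1)^((\<lambda>(k,b). sf (Suc M) k b) i)
        * t^(2 * (\<lambda>(k,b). sf (Suc M) k b) i+1) * (1-t\<^sup>2)^((\<lambda>(k,b). ef (Suc M) b) i))"
      by (rule sum.cong[OF refl]) (auto simp: split_beta)
    finally show ?thesis .
  qed
  show ?thesis using t eq unfolding S_def by (intro exI[of _ t]) auto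
qed

theorem lemma3p1:
  fixes M :: nat and \<tau> :: "nat \<Rightarrow> real"
  assumes "M \<ge> 1"
    and "\<forall>n\<le>M + 1. \<tau> n > 0"
    and "Sset M \<tau> \<noteq> {}"
  shows "Rset M \<tau> \<in> sets (lebM M) \<and> emeasure (lebM M) (Rset M \<tau>) > 0"
proof -
  have tau: "\<forall>n\<le>M + 1. \<tau> n > 0" by (rule assms(2))
  let ?P = "PiM {..M} (\<lambda>_::nat. lborel)"
  have meas: "Rset M \<tau> \<in> sets ?P" by (rule Rset_meas[OF tau])
  then have meas': "Rset M \<tau> \<in> sets (lebM M)" unfolding lebM_def by simp
  obtain t0 where t0: "0 < t0" "t0 < 1" "(\<Sum>k\<in>Sset M \<tau>. amp (Suc M) (\<lambda>_. t0) k) \<noteq> 0"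
     "\<bar>\<Sum>k\<in>Sset M \<tau>. amp (Suc M) (\<lambda>_. t0) k\<bar> < (1 - t0\<^sup>2) ^ Suc M"
    using exists_good_point[OF tau assms(3)] by blast
  define Rs where "Rs = (\<lambda>n. if n \<le> M then t0 else undefined :: real)"
  have ampeq: "amp (M+1) (Rs(M+1:=0)) k = amp (M+1) (\<lambda>_. t0) k" if "k \<in> Sset M \<tau>" for k
    by (rule amp_indep) (use Sset_last[OF tau that] in \<open>auto simp: Rs_def\<close>)
  have CRs: "Cf M \<tau> Rs = (\<Sum>k\<in>Sset M \<tau>. amp (Suc M) (\<lambda>_. t0) k)"
    unfolding Cf_def using ampeq by (intro sum.cong) auto
  have "Pf M Rs = (\<Prod>n\<le>M. 1 - t0\<^sup>2)" unfolding Pf_def by (rule prod.cong) (auto simp: Rs_def)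
  also have "\<dots> = (1 - t0\<^sup>2) ^ Suc M" by simp
  finally have PRs: "Pf M Rs = (1 - t0\<^sup>2) ^ Suc M" .
  define U where "U = {R::nat\<Rightarrow>real. Cf M \<tau> R \<noteq> 0} \<inter> {R. \<bar>Cf M \<tau> R\<bar> < Pf M R} \<inter> (\<Inter>i\<in>{..M}. {R. \<bar>R i\<bar> < 1})"
  have opi: "open {R::nat\<Rightarrow>real. \<bar>R i\<bar> < 1}" for i
  proof (rule open_Collect_less)
    show "continuous_on UNIV (\<lambda>R::nat\<Rightarrow>real. \<bar>R i\<bar>)"
      by (rule continuous_on_rabs) simp
  qed (rule continuous_on_const)
  have o1: "open {R::nat\<Rightarrow>real. Cf M \<tau> R \<noteq> 0}"
    by (rule open_Collect_neq) (simp_all add: Cf_cont)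
  have o2: "open {R::nat\<Rightarrow>real. \<bar>Cf M \<tau> R\<bar> < Pf M R}"
    by (rule open_Collect_less) (simp_all add: Pf_cont continuous_on_rabs Cf_cont)
  have o3: "open (\<Inter>i\<in>{..M}. {R::nat\<Rightarrow>real. \<bar>R i\<bar> < 1})"
    by (rule open_INT) (simp_all add: opi)
  have openU: "open U" unfolding U_def by (intro open_Int o1 o2 o3)
  have r1: "Cf M \<tau> Rs \<noteq> 0" using CRs t0(3) by simp
  have r2: "\<bar>Cf M \<tau> Rs\<bar> < Pf M Rs" using CRs PRs t0(4) by simp
  have r3: "\<forall>i\<le>M. \<bar>Rs i\<bar> < 1" using t0(1,2) by (simp add: Rs_def)
  have RsU: "Rs \<in> U" unfolding U_def using r1 r2 r3 by simp
  have opU': "openin (product_topology (\<lambda>i. euclidean) UNIV) U" using openU by (simp add: open_fun_def)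
  obtain X where X0: "Rs \<in> (\<Pi>\<^sub>E i\<in>UNIV. X i) \<and> (\<forall>i. openin euclidean (X i))
      \<and> finite {i. X i \<noteq> topspace euclidean} \<and> (\<Pi>\<^sub>E i\<in>UNIV. X i) \<subseteq> U"
    using product_topology_open_contains_basis[OF opU' RsU] by (rule exE)
  have X1: "Rs \<in> PiE UNIV X" using X0 by (rule conjunct1)
  have X3: "PiE UNIV X \<subseteq> U" using X0 by (elim conjE)
  have X2': "\<forall>i. openin euclidean (X i)" using X0 by (elim conjE)
  have X2: "\<forall>i. open (X i)" using X2' by (metis open_openin)
  note X = X1 X2 X3
  have "\<forall>i\<in>{..M}. \<exists>e>0. ball t0 e \<subseteq> X i"
  proof
    fix i assume i: "i \<in> {..M}"
    have "Rs i \<in> X i" using X(1) by (auto simp: PiE_iff)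
    then have "t0 \<in> X i" using i by (simp add: Rs_def)
    then show "\<exists>e>0. ball t0 e \<subseteq> X i" using X(2) by (simp add: open_contains_ball)
  qed
  then obtain e where e: "\<forall>i\<in>{..M}. e i > 0 \<and> ball t0 (e i) \<subseteq> X i" by metis
  define B where "B = PiE {..M} (\<lambda>i. {t0 - e i <..< t0 + e i})"
  have BR: "B \<subseteq> Rset M \<tau>"
  proof
    fix R assume R: "R \<in> B"
    have "R \<in> PiE UNIV X"
    proof (rule PiE_I)
      fix i show "R i \<in> X i"
      proof (cases "i \<le> M")
        case True
        then have "R i \<in> {t0 - e i <..< t0 + e i}" using R unfolding B_def by (auto simp: PiE_iff)
        then have "R i \<in> ball t0 (e i)" by (auto simp: dist_real_def)
        moreover have "ball t0 (e i) \<subseteq> X i" using e True by auto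
        ultimately show ?thesis by (rule subsetD[rotated])
      next
        case False
        then have "R i = undefined" using R unfolding B_def by (auto simp: PiE_iff extensional_def)
        moreover have "Rs i \<in> X i" using X(1) by (auto simp: PiE_iff)
        ultimately show ?thesis using False by (simp add: Rs_def)
      qed
    qed auto
    then have "R \<in> U" using X(3) by auto
    moreover have "R \<in> PiE {..M} (\<lambda>_. UNIV)" using R unfolding B_def by (auto simp: PiE_iff)
    ultimately show "R \<in> Rset M \<tau>" unfolding Rset_char[OF tau] U_def by auto
  qed
  have Bmeas: "B \<in> sets ?P" unfolding B_def by (rule sets_PiM_I_finite) auto
  interpret product_sigma_finite "\<lambda>_::nat. lborel" by standard
  have "emeasure ?P B = (\<Prod>i\<le>M. emeasure lborel {t0 - e i<..<t0 + e i})"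
    unfolding B_def by (rule emeasure_PiM) auto
  also have "\<dots> = (\<Prod>i\<le>M. ennreal (2 * e i))"
  proof (rule prod.cong[OF refl])
    fix i assume "i \<in> {..M}"
    then have ei: "e i > 0" using e by auto
    have "t0 + e i - (t0 - e i) = 2 * e i" by simp
    moreover have "t0 - e i \<le> t0 + e i" using ei by simp
    ultimately show "emeasure lborel {t0 - e i<..<t0 + e i} = ennreal (2 * e i)"
      by (simp only: emeasure_lborel_Ioo)
  qed
  also have "\<dots> = ennreal (\<Prod>i\<le>M. 2 * e i)"
    by (rule prod_ennreal) (use e in \<open>auto simp: less_imp_le\<close>)
  finally have Beq: "emeasure ?P B = ennreal (\<Prod>i\<le>M. 2 * e i)" .
  have "(\<Prod>i\<le>M. 2 * e i) > 0" using e by (auto intro!: prod_pos)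
  then have Bpos: "emeasure ?P B > 0" unfolding Beq by simp
  have "emeasure (lebM M) B = emeasure ?P B" unfolding lebM_def using Bmeas by simp
  moreover have "emeasure (lebM M) B \<le> emeasure (lebM M) (Rset M \<tau>)" by (rule emeasure_mono[OF BR meas'])
  ultimately have "emeasure (lebM M) (Rset M \<tau>) > 0" using Bpos by auto
  then show ?thesis using meas' by auto
qed

end
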